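(* Any $\omega$-recognizable preorder $\preceq$ on $\Sigma^\omega$ can be embedded into an $\omega$-recognizable total preorder $\preceq'$ (i.e., $\preceq\subseteq\preceq'$). Moreover, for all $x,y\in\Sigma^\omega$, if $x\bowtie y$ then $x\bowtie' y$, for each $\bowtie\in\{\preceq,\prec,\succeq,\succ,\sim\}$, where $\bowtie'$ denotes the corresponding relation derived from $\preceq'$.
   Context: A relation on $\Sigma^\omega$ is $\omega$-recognizable if it equals $\bigcup_{k=1}^{\ell}X_k\times Y_k$ with $X_k,Y_k$ $\omega$-regular. A preorder is reflexive and transitive; it is total if for all $x,y$, $x\preceq y$ or $y\preceq x$. From a preorder $\preceq$: $x\succeq y$ iff $y\preceq x$; $x\prec y$ iff $x\preceq y$ and $y\not\preceq x$; $x\succ y$ iff $y\prec x$; $x\sim y$ iff $x\preceq y$ and $y\preceq x$. *)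

theory Defs
  imports Main
begin

text \<open>Infinite words over a finite alphabet 'a (the type 'a plays the role of Sigma;
  Sigma^omega is the set UNIV of all functions nat => 'a).\<close>
type_synonym 'a oword = "nat \<Rightarrow> 'a"

definition buchi_accepts ::
  "nat set \<Rightarrow> nat set \<Rightarrow> (nat \<times> 'a \<times> nat) set \<Rightarrow> nat set \<Rightarrow> 'a oword \<Rightarrow> bool" where
  "buchi_accepts Q I Delta F w \<longleftrightarrow>
     (\<exists>r :: nat \<Rightarrow> nat. r 0 \<in> I \<and>
        (\<forall>i. r i \<in> Q \<and> (r i, w i, r (Suc i)) \<in> Delta) \<and>
        infinite {i. r i \<in> F})"

definition omega_regular :: "('a::finite) oword set \<Rightarrow> bool" where
  "omega_regular L \<longleftrightarrow>
     (\<exists>Q I Delta F. finite Q \<and> I \<subseteq> Q \<and> F \<subseteq> Q \<and> Delta \<subseteq> Q \<times> UNIV \<times> Q \<and>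
        L = {w. buchi_accepts Q I Delta F w})"

definition omega_recognizable :: "('a::finite) oword rel \<Rightarrow> bool" where
  "omega_recognizable R \<longleftrightarrow>
     (\<exists>(l::nat) X Y. (\<forall>k\<in>{1..l}. omega_regular (X k) \<and> omega_regular (Y k)) \<and>
        R = (\<Union>k\<in>{1..l}. X k \<times> Y k))"

definition pre_ge :: "'b rel \<Rightarrow> 'b \<Rightarrow> 'b \<Rightarrow> bool" where
  "pre_ge R x y \<longleftrightarrow> (y, x) \<in> R"

definition pre_less :: "'b rel \<Rightarrow> 'b \<Rightarrow> 'b \<Rightarrow> bool" where
  "pre_less R x y \<longleftrightarrow> (x, y) \<in> R \<and> (y, x) \<notin> R"

definition pre_greater :: "'b rel \<Rightarrow> 'b \<Rightarrow> 'b \<Rightarrow> bool" where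
  "pre_greater R x y \<longleftrightarrow> pre_less R y x"

definition pre_equiv :: "'b rel \<Rightarrow> 'b \<Rightarrow> 'b \<Rightarrow> bool" where
  "pre_equiv R x y \<longleftrightarrow> (x, y) \<in> R \<and> (y, x) \<in> R"

end

theory Submission
  imports Defs
begin

lemma recog_of_trans:
  fixes R R' :: "('a::finite) oword rel"
  assumes refl: "\<And>x. (x,x) \<in> R" and tr: "trans R'" and sub: "R \<subseteq> R'"
    and rec: "omega_recognizable R"
  shows "omega_recognizable R'"
proof -
  obtain l :: nat and X Y :: "nat \<Rightarrow> 'a oword set" where reg: "\<forall>k\<in>{1..l}. omega_regular (X k) \<and> omega_regular (Y k)"
    and Rdef: "R = (\<Union>k\<in>{1..l}. X k \<times> Y k)"
    using rec unfolding omega_recognizable_def by blast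
  define T where "T = {p \<in> {1..l} \<times> {1..l}. X (fst p) \<times> Y (snd p) \<subseteq> R'}"
  have finT: "finite T" by (rule finite_subset[of _ "{1..l} \<times> {1..l}"]) (auto simp: T_def)
  obtain g where g: "bij_betw g {1..card T} T" using ex_bij_betw_nat_finite_1[OF finT] by blast
  have eq: "R' = (\<Union>p\<in>T. X (fst p) \<times> Y (snd p))"
  proof
    show "(\<Union>p\<in>T. X (fst p) \<times> Y (snd p)) \<subseteq> R'" unfolding T_def by blast
  next
    show "R' \<subseteq> (\<Union>p\<in>T. X (fst p) \<times> Y (snd p))"
    proof
      fix q assume q: "q \<in> R'"
      obtain x y where qxy: "q = (x,y)" by (cases q)
      from refl[of x] obtain k where k: "k \<in> {1..l}" "x \<in> X k" "x \<in> Y k" unfolding Rdef by blast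
      from refl[of y] obtain k' where k': "k' \<in> {1..l}" "y \<in> X k'" "y \<in> Y k'" unfolding Rdef by blast
      have "X k \<times> Y k' \<subseteq> R'"
      proof
        fix p assume "p \<in> X k \<times> Y k'"
        then obtain a b where p: "p = (a,b)" "a \<in> X k" "b \<in> Y k'" by blast
        have "(a,x) \<in> R'" using sub k p unfolding Rdef by blast
        moreover have "(y,b) \<in> R'" using sub k' p unfolding Rdef by blast
        ultimately show "p \<in> R'" using q unfolding qxy p(1) by (meson transD[OF tr])
      qed
      then have "(k,k') \<in> T" unfolding T_def using k k' by auto
      then show "q \<in> (\<Union>p\<in>T. X (fst p) \<times> Y (snd p))"
        by (rule UN_I) (simp add: qxy k k')
    qed
  qed
  have "R' = (\<Union>i\<in>{1..card T}. (X \<circ> fst \<circ> g) i \<times> (Y \<circ> snd \<circ> g) i)"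
  proof -
    have "(\<Union>i\<in>{1..card T}. (X \<circ> fst \<circ> g) i \<times> (Y \<circ> snd \<circ> g) i)
        = (\<Union>p\<in>g ` {1..card T}. X (fst p) \<times> Y (snd p))" by simp
    also have "g ` {1..card T} = T" using g by (simp add: bij_betw_def)
    finally show ?thesis using eq by simp
  qed
  moreover have "\<forall>i\<in>{1..card T}. omega_regular ((X \<circ> fst \<circ> g) i) \<and> omega_regular ((Y \<circ> snd \<circ> g) i)"
  proof
    fix i assume "i \<in> {1..card T}"
    then have "g i \<in> T" using g by (auto simp: bij_betw_def)
    then have "fst (g i) \<in> {1..l}" "snd (g i) \<in> {1..l}" unfolding T_def by auto
    then show "omega_regular ((X \<circ> fst \<circ> g) i) \<and> omega_regular ((Y \<circ> snd \<circ> g) i)"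
      using reg by simp
  qed
  ultimately show ?thesis unfolding omega_recognizable_def by blast
qed

theorem proposition12:
  fixes R :: "('a::finite) oword rel"
  assumes "preorder_on UNIV R"
    and "omega_recognizable R"
  shows "\<exists>R' :: 'a oword rel.
           preorder_on UNIV R' \<and> total_on UNIV R' \<and> omega_recognizable R' \<and> R \<subseteq> R' \<and>
           (\<forall>x y. ((x, y) \<in> R \<longrightarrow> (x, y) \<in> R') \<and>
                  (pre_less R x y \<longrightarrow> pre_less R' x y) \<and>
                  (pre_ge R x y \<longrightarrow> pre_ge R' x y) \<and>
                  (pre_greater R x y \<longrightarrow> pre_greater R' x y) \<and>
                  (pre_equiv R x y \<longrightarrow> pre_equiv R' x y))"
proof -
  have refl: "\<And>x. (x,x) \<in> R" and trR: "trans R"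
    using assms(1) unfolding preorder_on_def refl_on_def by auto
  have trI: "\<And>x y z. (x,y) \<in> R \<Longrightarrow> (y,z) \<in> R \<Longrightarrow> (x,z) \<in> R"
    using trR by (meson transD)
  obtain l :: nat and X Y :: "nat \<Rightarrow> 'a oword set" where Rdef: "R = (\<Union>k\<in>{1..l}. X k \<times> Y k)"
    using assms(2) unfolding omega_recognizable_def by blast
  define up where "up z = R `` {z}" for z
  have up_eq: "up z = (\<lambda>K. \<Union>k\<in>K. Y k) {k \<in> {1..l}. z \<in> X k}" for z
    unfolding up_def Rdef by auto
  have upfin: "finite (range up)"
  proof (rule finite_subset)
    show "range up \<subseteq> (\<lambda>K. \<Union>k\<in>K. Y k) ` Pow {1..l}" using up_eq by blast
  qed simp
  have up_inj: "(z,w) \<in> R" if "up z = up w" for z w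
    using that refl[of w] unfolding up_def by blast
  define S where "S x = up ` {z. pre_less R z x}" for x
  define h where "h x = card (S x)" for x
  have Sfin: "finite (S x)" for x using upfin unfolding S_def
    by (rule finite_subset[rotated]) auto
  have Smono: "S x \<subseteq> S y" if "(x,y) \<in> R" for x y
    unfolding S_def pre_less_def using that trI by blast
  have Sstrict: "S x \<subset> S y" if "pre_less R x y" for x y
  proof -
    have "S x \<subseteq> S y" using Smono that unfolding pre_less_def by blast
    moreover have "up x \<in> S y" using that unfolding S_def by blast
    moreover have "up x \<notin> S x"
    proof
      assume "up x \<in> S x"
      then obtain z where "pre_less R z x" "up x = up z" unfolding S_def by blast
      then show False using up_inj unfolding pre_less_def by blast
    qed
    ultimately show ?thesis by blast
  qed
  have hle: "h x \<le> h y" if "(x,y) \<in> R" for x y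
    unfolding h_def using Smono[OF that] Sfin by (simp add: card_mono)
  have hlt: "h x < h y" if "pre_less R x y" for x y
    unfolding h_def using Sstrict[OF that] Sfin by (simp add: psubset_card_mono)
  define R' where "R' = {(x,y). h x \<le> h y}"
  have sub: "R \<subseteq> R'" unfolding R'_def using hle by auto
  have tr': "trans R'" unfolding R'_def trans_def by auto
  show ?thesis
  proof (intro exI[of _ R'] conjI allI impI)
    show "preorder_on UNIV R'" unfolding preorder_on_def refl_on_def R'_def trans_def by auto
    show "total_on UNIV R'" unfolding total_on_def R'_def by auto
    show "omega_recognizable R'" using recog_of_trans[OF refl tr' sub assms(2)] .
    show "R \<subseteq> R'" by (rule sub)
    fix x y
    show "(x,y) \<in> R'" if "(x,y) \<in> R" using that sub by blast
    show "pre_less R' x y" if "pre_less R x y" using hlt[OF that]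
      unfolding pre_less_def R'_def by auto
    show "pre_ge R' x y" if "pre_ge R x y" using that sub unfolding pre_ge_def by blast
    show "pre_greater R' x y" if "pre_greater R x y" using hlt that
      unfolding pre_greater_def pre_less_def R'_def by fastforce
    show "pre_equiv R' x y" if "pre_equiv R x y" using that sub unfolding pre_equiv_def by blast
  qed
qed

end
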